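(* Let $n\ge d$, $L=\{\ell_1,\dots,\ell_n\}$, $R=\{r_1,\dots,r_d\}$, let $\mathcal{M}=(M_\sigma)$ be a linkage $(n,d)$-matching field and let $\sigma,\sigma'$ be two $d$-element subsets of $L$. If there are subsets $P\subseteq\sigma\cap\sigma'$ and $Q\subseteq R$ with $|P|=|Q|$ such that the restrictions $M_\sigma|_{P\sqcup Q}$ and $M_{\sigma'}|_{P\sqcup Q}$ (induced subgraphs on $P\sqcup Q$) are perfect matchings, then these matchings agree.
   Context: An $(n,d)$-matching field $\mathcal{M}=(M_\sigma)$ assigns to each $d$-subset $\sigma\subseteq L$ a perfect matching $M_\sigma$ between $\sigma$ and $R$. It is linkage if for every $r_i\in R$ and every $(d+1)$-subset $\tau\subseteq L$ there exist distinct $\ell_j,\ell_{j'}\in\tau$ such that $M_{\tau\setminus\{\ell_j\}}$ and $M_{\tau\setminus\{\ell_{j'}\}}$ agree everywhere except on the edges incident with $r_i$. *)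

theory Defs
  imports Main
begin

definition perfect_matching :: "('a \<times> 'b) set \<Rightarrow> 'a set \<Rightarrow> 'b set \<Rightarrow> bool" where
  "perfect_matching M A B \<longleftrightarrow>
     M \<subseteq> A \<times> B \<and>
     (\<forall>a\<in>A. \<exists>!b. (a, b) \<in> M) \<and>
     (\<forall>b\<in>B. \<exists>!a. (a, b) \<in> M)"

definition restrict_graph :: "('a \<times> 'b) set \<Rightarrow> 'a set \<Rightarrow> 'b set \<Rightarrow> ('a \<times> 'b) set" where
  "restrict_graph M P Q = M \<inter> (P \<times> Q)"

definition matching_field :: "'a set \<Rightarrow> 'b set \<Rightarrow> ('a set \<Rightarrow> ('a \<times> 'b) set) \<Rightarrow> bool" where
  "matching_field L R M \<longleftrightarrow>
     (\<forall>\<sigma>. \<sigma> \<subseteq> L \<and> card \<sigma> = card R \<longrightarrow> perfect_matching (M \<sigma>) \<sigma> R)"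

definition edges_avoiding :: "('a \<times> 'b) set \<Rightarrow> 'b \<Rightarrow> ('a \<times> 'b) set" where
  "edges_avoiding M r = {e \<in> M. snd e \<noteq> r}"

definition linkage_matching_field :: "'a set \<Rightarrow> 'b set \<Rightarrow> ('a set \<Rightarrow> ('a \<times> 'b) set) \<Rightarrow> bool" where
  "linkage_matching_field L R M \<longleftrightarrow>
     matching_field L R M \<and>
     (\<forall>r\<in>R. \<forall>\<tau>. \<tau> \<subseteq> L \<and> card \<tau> = card R + 1 \<longrightarrow>
        (\<exists>l\<in>\<tau>. \<exists>l'\<in>\<tau>. l \<noteq> l' \<and>
           edges_avoiding (M (\<tau> - {l})) r = edges_avoiding (M (\<tau> - {l'})) r))"

end

theory Submission
  imports Defs
begin

locale lmf =
  fixes L :: "'a set" and R :: "'b set" and M :: "'a set \<Rightarrow> ('a \<times> 'b) set"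
  assumes finL: "finite L" and finR: "finite R" and lk: "linkage_matching_field L R M"
begin

definition adm where "adm \<sigma> \<longleftrightarrow> \<sigma> \<subseteq> L \<and> card \<sigma> = card R"
definition mt where "mt \<sigma> v = (THE r. (v, r) \<in> M \<sigma>)"

lemma pm: "adm \<sigma> \<Longrightarrow> perfect_matching (M \<sigma>) \<sigma> R"
  using lk unfolding linkage_matching_field_def matching_field_def adm_def by blast

lemma mt_mem: assumes "adm \<sigma>" "v \<in> \<sigma>" shows "(v, mt \<sigma> v) \<in> M \<sigma>"
proof -
  from pm[OF assms(1)] assms(2) have "\<exists>!r. (v,r) \<in> M \<sigma>" unfolding perfect_matching_def by blast
  then show ?thesis unfolding mt_def by (rule theI')
qed

lemma mt_R: "adm \<sigma> \<Longrightarrow> v \<in> \<sigma> \<Longrightarrow> mt \<sigma> v \<in> R"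
  using mt_mem pm unfolding perfect_matching_def by blast

lemma mt_iff: assumes "adm \<sigma>" shows "(v, r) \<in> M \<sigma> \<longleftrightarrow> v \<in> \<sigma> \<and> r = mt \<sigma> v"
proof
  assume h: "(v,r) \<in> M \<sigma>"
  then have v: "v \<in> \<sigma>" using pm[OF assms] unfolding perfect_matching_def by blast
  have "\<exists>!r. (v,r) \<in> M \<sigma>" using pm[OF assms] v unfolding perfect_matching_def by blast
  then show "v \<in> \<sigma> \<and> r = mt \<sigma> v" using h mt_mem[OF assms v] v by blast
next
  assume "v \<in> \<sigma> \<and> r = mt \<sigma> v" then show "(v,r) \<in> M \<sigma>" using mt_mem[OF assms] by blast
qed

lemma mt_inj: assumes "adm \<sigma>" shows "inj_on (mt \<sigma>) \<sigma>"
proof (rule inj_onI)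
  fix x y assume x: "x \<in> \<sigma>" and y: "y \<in> \<sigma>" and e: "mt \<sigma> x = mt \<sigma> y"
  have "mt \<sigma> x \<in> R" using mt_R[OF assms x] .
  then have "\<exists>!a. (a, mt \<sigma> x) \<in> M \<sigma>" using pm[OF assms] unfolding perfect_matching_def by blast
  moreover have "(x, mt \<sigma> x) \<in> M \<sigma>" "(y, mt \<sigma> x) \<in> M \<sigma>" using mt_mem[OF assms x] mt_mem[OF assms y] e by auto
  ultimately show "x = y" by blast
qed

lemma mt_surj: assumes "adm \<sigma>" "r \<in> R" shows "\<exists>v\<in>\<sigma>. mt \<sigma> v = r"
proof -
  obtain v where "(v, r) \<in> M \<sigma>" using pm[OF assms(1)] assms(2) unfolding perfect_matching_def by blast
  then have "v \<in> \<sigma> \<and> r = mt \<sigma> v" using mt_iff[OF assms(1)] by blast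
  then show ?thesis by blast
qed

lemma adm_finite: "adm \<sigma> \<Longrightarrow> finite \<sigma>" using finL adm_def finite_subset by blast

lemma adm_minus: assumes "\<tau> \<subseteq> L" "card \<tau> = Suc (card R)" "x \<in> \<tau>" shows "adm (\<tau> - {x})"
proof -
  have "finite \<tau>" using assms(1) finL finite_subset by blast
  then show ?thesis using assms unfolding adm_def by auto
qed

lemma link: assumes "\<tau> \<subseteq> L" "card \<tau> = Suc (card R)" "r \<in> R"
  shows "\<exists>l l'. l \<in> \<tau> \<and> l' \<in> \<tau> \<and> l \<noteq> l' \<and> mt (\<tau>-{l}) l' = r \<and> mt (\<tau>-{l'}) l = r
     \<and> (\<forall>v\<in>\<tau>-{l,l'}. mt (\<tau>-{l}) v = mt (\<tau>-{l'}) v)"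
proof -
  have "\<exists>l\<in>\<tau>. \<exists>l'\<in>\<tau>. l \<noteq> l' \<and> edges_avoiding (M (\<tau> - {l})) r = edges_avoiding (M (\<tau> - {l'})) r"
  proof -
    have H: "\<And>r \<tau>. r \<in> R \<Longrightarrow> \<tau> \<subseteq> L \<Longrightarrow> card \<tau> = card R + 1 \<Longrightarrow>
      \<exists>l\<in>\<tau>. \<exists>l'\<in>\<tau>. l \<noteq> l' \<and> edges_avoiding (M (\<tau> - {l})) r = edges_avoiding (M (\<tau> - {l'})) r"
      using lk unfolding linkage_matching_field_def by blast
    show ?thesis using H[OF assms(3) assms(1)] assms(2) by simp
  qed
  then obtain l l' where l: "l \<in> \<tau>" "l' \<in> \<tau>" "l \<noteq> l'"
    and eq: "edges_avoiding (M (\<tau> - {l})) r = edges_avoiding (M (\<tau> - {l'})) r" by blast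
  have a1: "adm (\<tau> - {l})" and a2: "adm (\<tau>-{l'})" using adm_minus assms l by auto
  have e1: "mt (\<tau>-{l}) l' = r"
  proof (rule ccontr)
    assume ne: "mt (\<tau>-{l}) l' \<noteq> r"
    have "(l', mt (\<tau>-{l}) l') \<in> edges_avoiding (M (\<tau> - {l})) r"
      unfolding edges_avoiding_def using mt_mem[OF a1] l ne by auto
    then have "(l', mt (\<tau>-{l}) l') \<in> edges_avoiding (M (\<tau> - {l'})) r" using eq by simp
    then have "(l', mt (\<tau>-{l}) l') \<in> M (\<tau>-{l'})" unfolding edges_avoiding_def by simp
    then show False using mt_iff[OF a2] by auto
  qed
  have e2: "mt (\<tau>-{l'}) l = r"
  proof (rule ccontr)
    assume ne: "mt (\<tau>-{l'}) l \<noteq> r"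
    have "(l, mt (\<tau>-{l'}) l) \<in> edges_avoiding (M (\<tau> - {l'})) r"
      unfolding edges_avoiding_def using mt_mem[OF a2] l ne by auto
    then have "(l, mt (\<tau>-{l'}) l) \<in> edges_avoiding (M (\<tau> - {l})) r" using eq by simp
    then have "(l, mt (\<tau>-{l'}) l) \<in> M (\<tau>-{l})" unfolding edges_avoiding_def by simp
    then show False using mt_iff[OF a1] by auto
  qed
  have agree: "\<forall>v\<in>\<tau>-{l,l'}. mt (\<tau>-{l}) v = mt (\<tau>-{l'}) v"
  proof
    fix v assume v: "v \<in> \<tau>-{l,l'}"
    show "mt (\<tau>-{l}) v = mt (\<tau>-{l'}) v"
    proof (cases "mt (\<tau>-{l}) v = r")
      case True
      then have "mt (\<tau>-{l}) v = mt (\<tau>-{l}) l'" using e1 by simp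
      then have "v = l'" using inj_onD[OF mt_inj[OF a1]] v l by auto
      then show ?thesis using v by auto
    next
      case False
      have "(v, mt (\<tau>-{l}) v) \<in> edges_avoiding (M (\<tau> - {l})) r"
        unfolding edges_avoiding_def using mt_mem[OF a1] v False by auto
      then have "(v, mt (\<tau>-{l}) v) \<in> edges_avoiding (M (\<tau> - {l'})) r" using eq by simp
      then have "(v, mt (\<tau>-{l}) v) \<in> M (\<tau>-{l'})" unfolding edges_avoiding_def by simp
      then show ?thesis using mt_iff[OF a2] by auto
    qed
  qed
  show ?thesis using l e1 e2 agree by blast
qed

end

locale tau = lmf +
  fixes \<tau> assumes tL: "\<tau> \<subseteq> L" and tc: "card \<tau> = Suc (card R)"
begin

definition g where "g x v = mt (\<tau> - {x}) v"
definition Adj where "Adj = {(x,y). x \<in> \<tau> \<and> y \<in> \<tau> \<and> x \<noteq> y \<and> g x y = g y x \<and> (\<forall>v\<in>\<tau>-{x,y}. g x v = g y v)}"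

lemma finT: "finite \<tau>" using tL finL finite_subset by blast
lemma admT: "x \<in> \<tau> \<Longrightarrow> adm (\<tau> - {x})" using adm_minus tL tc by blast
lemma g_eq: "g x = mt (\<tau> - {x})" by (simp add: fun_eq_iff g_def)
lemma g_inj: "x \<in> \<tau> \<Longrightarrow> inj_on (g x) (\<tau> - {x})" using mt_inj admT g_eq by simp
lemma g_surj: "x \<in> \<tau> \<Longrightarrow> r \<in> R \<Longrightarrow> \<exists>v\<in>\<tau>-{x}. g x v = r" using mt_surj admT g_eq by simp

lemma link': "r \<in> R \<Longrightarrow> \<exists>l l'. (l,l') \<in> Adj \<and> g l l' = r"
proof -
  assume r: "r \<in> R"
  obtain l l' where "l \<in> \<tau> \<and> l' \<in> \<tau> \<and> l \<noteq> l' \<and> mt (\<tau>-{l}) l' = r \<and> mt (\<tau>-{l'}) l = r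
     \<and> (\<forall>v\<in>\<tau>-{l,l'}. mt (\<tau>-{l}) v = mt (\<tau>-{l'}) v)" using link[OF tL tc r] by blast
  then have "(l,l') \<in> Adj \<and> g l l' = r" unfolding Adj_def g_def by auto
  then show ?thesis by blast
qed

lemma Adj_sym: "(x,y) \<in> Adj \<Longrightarrow> (y,x) \<in> Adj" unfolding Adj_def by (auto simp: insert_commute)
lemma Adj_sub: "(x,y) \<in> Adj \<Longrightarrow> x \<in> \<tau> \<and> y \<in> \<tau>" unfolding Adj_def by auto
lemma Adj_ne: "(x,y) \<in> Adj \<Longrightarrow> x \<noteq> y" unfolding Adj_def by auto
lemma Adj_agree: "(x,y) \<in> Adj \<Longrightarrow> v \<in> \<tau> \<Longrightarrow> v \<noteq> x \<Longrightarrow> v \<noteq> y \<Longrightarrow> g x v = g y v" unfolding Adj_def by auto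
lemma Adj_swap: "(x,y) \<in> Adj \<Longrightarrow> g x y = g y x" unfolding Adj_def by auto

lemma sym_Adj: "sym Adj" by (auto intro: symI Adj_sym)
lemma rt_sym: "(x,y) \<in> Adj\<^sup>* \<Longrightarrow> (y,x) \<in> Adj\<^sup>*"
  using sym_rtrancl[OF sym_Adj] unfolding sym_def by blast

lemma rt_tau: "(x,y) \<in> Adj\<^sup>* \<Longrightarrow> x \<in> \<tau> \<Longrightarrow> y \<in> \<tau>"
  by (induction rule: rtrancl_induct) (auto dest: Adj_sub)

lemma transport: assumes "(x,y) \<in> Adj\<^sup>*" "v \<in> \<tau>" "(x,v) \<notin> Adj\<^sup>*" shows "g x v = g y v"
  using assms(1)
proof (induction rule: rtrancl_induct)
  case base then show ?case by simp
next
  case (step y z)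
  have "y \<noteq> v" using step.hyps(1) assms(3) by auto
  moreover have "z \<noteq> v" using step.hyps assms(3) by (meson rtrancl.rtrancl_into_rtrancl)
  ultimately have "g y v = g z v" using step.hyps(2) assms(2) unfolding Adj_def by auto
  then show ?case using step.IH by simp
qed

lemma connected: assumes "x0 \<in> \<tau>" "y0 \<in> \<tau>" shows "(x0,y0) \<in> Adj\<^sup>*"
proof (rule ccontr)
  assume nc: "(x0,y0) \<notin> Adj\<^sup>*"
  define \<beta> where "\<beta> x = (SOME z. (x,z) \<in> Adj\<^sup>*)" for x
  have \<beta>in: "(x, \<beta> x) \<in> Adj\<^sup>*" for x unfolding \<beta>_def by (rule someI[of _ x]) simp
  have ceq: "\<beta> x = \<beta> y" if "(x,y) \<in> Adj\<^sup>*" for x y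
  proof -
    have "\<forall>z. (x,z) \<in> Adj\<^sup>* \<longleftrightarrow> (y,z) \<in> Adj\<^sup>*"
    proof
      fix z
      have yx: "(y,x) \<in> Adj\<^sup>*" using that by (rule rt_sym)
      show "(x,z) \<in> Adj\<^sup>* \<longleftrightarrow> (y,z) \<in> Adj\<^sup>*"
        using rtrancl_trans[OF that, of z] rtrancl_trans[OF yx, of z] by blast
    qed
    then show "\<beta> x = \<beta> y" unfolding \<beta>_def by simp
  qed
  define lr where "lr r = (SOME l. \<exists>l'. (l,l') \<in> Adj \<and> g l l' = r)" for r
  define lr' where "lr' r = (SOME l'. (lr r,l') \<in> Adj \<and> g (lr r) l' = r)" for r
  have lr: "(lr r, lr' r) \<in> Adj \<and> g (lr r) (lr' r) = r" if r: "r \<in> R" for r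
  proof -
    have "\<exists>l'. (lr r,l') \<in> Adj \<and> g (lr r) l' = r" unfolding lr_def
      using link'[OF r] by (rule someI_ex)
    then show ?thesis unfolding lr'_def by (rule someI_ex)
  qed
  define h where "h r = (SOME v. v \<in> \<tau> - {\<beta> (lr r)} \<and> g (\<beta> (lr r)) v = r)" for r
  have hprop: "h r \<in> \<tau> - {\<beta> (lr r)} \<and> g (\<beta> (lr r)) (h r) = r" if r: "r \<in> R" for r
  proof -
    have "lr r \<in> \<tau>" using lr[OF r] Adj_sub by blast
    then have "\<beta> (lr r) \<in> \<tau>" using rt_tau[OF \<beta>in[of "lr r"]] by blast
    then have "\<exists>v. v \<in> \<tau> - {\<beta> (lr r)} \<and> g (\<beta> (lr r)) v = r" using g_surj r by blast
    then show ?thesis unfolding h_def by (rule someI_ex)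
  qed
  have hc: "(lr r, h r) \<in> Adj\<^sup>*" if r: "r \<in> R" for r
  proof (rule ccontr)
    assume n: "(lr r, h r) \<notin> Adj\<^sup>*"
    have l: "lr r \<in> \<tau>" using lr[OF r] Adj_sub by blast
    have x: "(lr r, \<beta> (lr r)) \<in> Adj\<^sup>*" by (rule \<beta>in)
    have xl: "(\<beta> (lr r), lr r) \<in> Adj\<^sup>*" using rt_sym x .
    have nv: "(\<beta> (lr r), h r) \<notin> Adj\<^sup>*"
    proof
      assume "(\<beta> (lr r), h r) \<in> Adj\<^sup>*"
      with x have "(lr r, h r) \<in> Adj\<^sup>*" by (rule rtrancl_trans)
      with n show False by simp
    qed
    have hp: "h r \<in> \<tau> - {\<beta> (lr r)}" "g (\<beta> (lr r)) (h r) = r" using hprop[OF r] by auto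
    have vt: "h r \<in> \<tau>" using hp(1) by simp
    have "g (\<beta> (lr r)) (h r) = g (lr r) (h r)" using transport[OF xl vt nv] .
    have ad: "(lr r, lr' r) \<in> Adj" "g (lr r) (lr' r) = r" using lr[OF r] by auto
    have e: "g (lr r) (h r) = g (lr r) (lr' r)" using hp(2) ad(2) \<open>g (\<beta> (lr r)) (h r) = g (lr r) (h r)\<close> by simp
    have "h r \<noteq> lr r"
    proof
      assume "h r = lr r"
      then have "(lr r, h r) \<in> Adj\<^sup>*" by simp
      with n show False by simp
    qed
    then have m1: "h r \<in> \<tau> - {lr r}" using vt by simp
    have "lr' r \<noteq> lr r" "lr' r \<in> \<tau>" using Adj_ne[OF ad(1)] Adj_sub[OF ad(1)] by auto
    then have m2: "lr' r \<in> \<tau> - {lr r}" by simp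
    have "h r = lr' r" using inj_onD[OF g_inj[OF l] e m1 m2] .
    then have "(lr r, h r) \<in> Adj" using ad(1) by simp
    then have "(lr r, h r) \<in> Adj\<^sup>*" by (rule r_into_rtrancl)
    with n show False by simp
  qed
  have hinj: "inj_on h R"
  proof (rule inj_onI)
    fix r1 r2 assume r1: "r1 \<in> R" and r2: "r2 \<in> R" and e: "h r1 = h r2"
    have "(h r1, lr r2) \<in> Adj\<^sup>*" using rt_sym[OF hc[OF r2]] e by simp
    with hc[OF r1] have "(lr r1, lr r2) \<in> Adj\<^sup>*" by (rule rtrancl_trans)
    then have eb: "\<beta> (lr r1) = \<beta> (lr r2)" by (rule ceq)
    have "r1 = g (\<beta> (lr r1)) (h r1)" using hprop[OF r1] by simp
    also have "\<dots> = g (\<beta> (lr r2)) (h r2)" using eb e by simp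
    also have "\<dots> = r2" using hprop[OF r2] by simp
    finally show "r1 = r2" .
  qed
  have bne: "\<beta> x0 \<noteq> \<beta> y0"
  proof
    assume "\<beta> x0 = \<beta> y0"
    then have "(x0, \<beta> y0) \<in> Adj\<^sup>*" using \<beta>in[of x0] by simp
    moreover have "(\<beta> y0, y0) \<in> Adj\<^sup>*" using \<beta>in[of y0] by (rule rt_sym)
    ultimately have "(x0, y0) \<in> Adj\<^sup>*" by (rule rtrancl_trans)
    with nc show False by simp
  qed
  have hav: "h r \<notin> {\<beta> x0, \<beta> y0}" if r: "r \<in> R" for r
  proof
    assume "h r \<in> {\<beta> x0, \<beta> y0}"
    then obtain z where z: "h r = \<beta> z" by auto
    have "(z, h r) \<in> Adj\<^sup>*" using z \<beta>in[of z] by simp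
    then have "(h r, z) \<in> Adj\<^sup>*" by (rule rt_sym)
    with hc[OF r] have "(lr r, z) \<in> Adj\<^sup>*" by (rule rtrancl_trans)
    then have "\<beta> (lr r) = \<beta> z" by (rule ceq)
    then have "h r = \<beta> (lr r)" using z by simp
    then show False using hprop[OF r] by simp
  qed
  have sub: "h ` R \<subseteq> \<tau> - {\<beta> x0, \<beta> y0}"
  proof
    fix v assume "v \<in> h ` R"
    then obtain r where r: "r \<in> R" "v = h r" by blast
    show "v \<in> \<tau> - {\<beta> x0, \<beta> y0}" using hprop[OF r(1)] hav[OF r(1)] r(2) by auto
  qed
  have c1: "card (h ` R) = card R" using card_image[OF hinj] .
  have c2: "card (h ` R) \<le> card (\<tau> - {\<beta> x0, \<beta> y0})" using card_mono[OF _ sub] finT by simp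
  have bt: "\<beta> x0 \<in> \<tau>" "\<beta> y0 \<in> \<tau>" using rt_tau[OF \<beta>in[of x0] assms(1)] rt_tau[OF \<beta>in[of y0] assms(2)] by auto
  have c3: "card (\<tau> - {\<beta> x0, \<beta> y0}) = card \<tau> - 2"
    using card_Diff_subset[of "{\<beta> x0, \<beta> y0}" \<tau>] bt bne by auto
  have c4: "2 \<le> card \<tau>" using card_mono[OF finT, of "{\<beta> x0, \<beta> y0}"] bt bne by auto
  show False using c1 c2 c3 c4 tc by simp
qed

lemma walk: assumes "b \<in> \<tau>" "A \<subseteq> \<tau>" "b \<notin> A" "A \<noteq> {}"
  shows "\<exists>u a'. u \<in> \<tau> \<and> u \<notin> A \<and> a' \<in> A \<and> (u,a') \<in> Adj \<and> (\<forall>v\<in>A. g b v = g u v)"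
proof -
  define S where "S = {(p,q). (p,q) \<in> Adj \<and> p \<notin> A \<and> q \<notin> A}"
  have K: "u \<in> \<tau> \<and> u \<notin> A \<and> (\<forall>v\<in>A. g b v = g u v)" if "(b,u) \<in> S\<^sup>*" for u
    using that
  proof (induction rule: rtrancl_induct)
    case base then show ?case using assms by simp
  next
    case (step y z)
    have yz: "(y,z) \<in> Adj" "y \<notin> A" "z \<notin> A" using step.hyps(2) unfolding S_def by auto
    have "\<forall>v\<in>A. g y v = g z v"
    proof
      fix v assume v: "v \<in> A"
      then have "v \<in> \<tau>" "v \<noteq> y" "v \<noteq> z" using yz assms(2) by auto
      then show "g y v = g z v" using Adj_agree[OF yz(1)] by blast
    qed
    moreover have "z \<in> \<tau>" using Adj_sub[OF yz(1)] by simp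
    ultimately show ?case using step.IH yz(3) by auto
  qed
  have ex: "\<exists>u a'. (b,u) \<in> S\<^sup>* \<and> a' \<in> A \<and> (u,a') \<in> Adj"
  proof (rule ccontr)
    assume no: "\<not> ?thesis"
    have R: "(b,y) \<in> S\<^sup>*" if "(b,y) \<in> Adj\<^sup>*" for y
      using that
    proof (induction rule: rtrancl_induct)
      case base then show ?case by simp
    next
      case (step y z)
      have "y \<notin> A" using K[OF step.IH] by blast
      moreover have "z \<notin> A"
      proof
        assume "z \<in> A"
        then have "\<exists>u a'. (b,u) \<in> S\<^sup>* \<and> a' \<in> A \<and> (u,a') \<in> Adj" using step.IH step.hyps(2) by blast
        with no show False by blast
      qed
      ultimately have "(y,z) \<in> S" using step.hyps(2) unfolding S_def by simp
      with step.IH show ?case by (rule rtrancl.rtrancl_into_rtrancl)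
    qed
    obtain a where a: "a \<in> A" using assms(4) by blast
    then have "(b,a) \<in> Adj\<^sup>*" using connected assms(1,2) by blast
    then have "(b,a) \<in> S\<^sup>*" by (rule R)
    then have "a \<notin> A" using K[of a] by blast
    with a show False by simp
  qed
  then obtain u a' where ua: "(b,u) \<in> S\<^sup>*" "a' \<in> A" "(u,a') \<in> Adj" by blast
  then show ?thesis using K[OF ua(1)] by blast
qed

lemma root: assumes "b \<in> \<tau>" "A \<subseteq> \<tau>" "b \<notin> A" "A \<noteq> {}"
  shows "\<exists>a'\<in>A. \<forall>a\<in>A-{a'}. g a' a = g b a"
proof -
  obtain u a' where u: "u \<in> \<tau>" "u \<notin> A" "a' \<in> A" "(u,a') \<in> Adj" "\<forall>v\<in>A. g b v = g u v"
    using walk[OF assms] by blast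
  have "\<forall>a\<in>A-{a'}. g a' a = g b a"
  proof
    fix a assume a: "a \<in> A - {a'}"
    then have "a \<in> \<tau>" "a \<noteq> u" "a \<noteq> a'" using u assms(2) by auto
    then have "g u a = g a' a" using Adj_agree[OF u(4)] by blast
    then show "g a' a = g b a" using u(5) a by auto
  qed
  then show ?thesis using u(3) by blast
qed

lemma F1: assumes "a \<in> \<tau>" "b \<in> \<tau>" "a \<noteq> b"
  shows "\<exists>u. u \<in> \<tau> \<and> u \<noteq> a \<and> g u a = g b a \<and> (\<forall>v\<in>\<tau>-{a,u}. g u v = g a v)"
proof -
  obtain u a' where u: "u \<in> \<tau>" "u \<notin> {a}" "a' \<in> {a}" "(u,a') \<in> Adj" "\<forall>v\<in>{a}. g b v = g u v"
    using walk[of b "{a}"] assms by auto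
  then have "(u,a) \<in> Adj" by simp
  then have "\<forall>v\<in>\<tau>-{a,u}. g u v = g a v" using Adj_agree by blast
  then show ?thesis using u by auto
qed

end

context lmf
begin

lemma tau_interp: "\<tau> \<subseteq> L \<Longrightarrow> card \<tau> = Suc (card R) \<Longrightarrow> tau L R M \<tau>"
  unfolding tau_def tau_axioms_def using lmf_axioms by blast

lemma claimE:
  assumes "adm \<sigma>" "adm \<sigma>'" "\<sigma> \<noteq> \<sigma>'"
  shows "\<exists>a\<in>\<sigma>-\<sigma>'. \<exists>w\<in>\<sigma>'. mt (insert a (\<sigma>' - {w})) a = mt \<sigma> a
           \<and> (\<forall>v\<in>\<sigma>'-{w}. mt (insert a (\<sigma>' - {w})) v = mt \<sigma>' v)"
  using assms
proof (induction "card (\<sigma> - \<sigma>')" arbitrary: \<sigma> rule: less_induct)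
  case less
  have fs: "finite \<sigma>" "finite \<sigma>'" using adm_finite less.prems by auto
  have cs: "card \<sigma> = card \<sigma>'" using less.prems adm_def by simp
  have A: "\<sigma> - \<sigma>' \<noteq> {}"
  proof
    assume "\<sigma> - \<sigma>' = {}"
    then have "\<sigma> \<subseteq> \<sigma>'" by blast
    then have "\<sigma> = \<sigma>'" using card_subset_eq[OF fs(2)] cs by simp
    with less.prems(3) show False by simp
  qed
  have B: "\<sigma>' - \<sigma> \<noteq> {}"
  proof
    assume "\<sigma>' - \<sigma> = {}"
    then have "\<sigma>' \<subseteq> \<sigma>" by blast
    then have "\<sigma>' = \<sigma>" using card_subset_eq[OF fs(1)] cs by simp
    with less.prems(3) show False by simp
  qed
  obtain b where b: "b \<in> \<sigma>'" "b \<notin> \<sigma>" using B by blast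
  define \<tau> where "\<tau> = insert b \<sigma>"
  have tL: "\<tau> \<subseteq> L" using less.prems b adm_def \<tau>_def by auto
  have tc: "card \<tau> = Suc (card R)" using fs b less.prems adm_def \<tau>_def by simp
  interpret T: tau L R M \<tau> using tau_interp[OF tL tc] .
  have gb: "T.g b a = mt \<sigma> a" for a
  proof -
    have "\<tau> - {b} = \<sigma>" using b unfolding \<tau>_def by auto
    then show ?thesis by (simp add: T.g_def)
  qed
  obtain a' where a': "a' \<in> \<sigma> - \<sigma>'" "\<forall>a\<in>(\<sigma>-\<sigma>')-{a'}. T.g a' a = T.g b a"
    using T.root[of b "\<sigma> - \<sigma>'"] A b \<tau>_def by auto
  show ?case
  proof (cases "\<sigma> - \<sigma>' = {a'}")
    case True
    have "card (\<sigma>' - \<sigma>) = card (\<sigma> - \<sigma>')"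
      using card_Diff_subset_Int[of \<sigma>' \<sigma>] card_Diff_subset_Int[of \<sigma> \<sigma>'] fs cs
      by (simp add: Int_commute)
    then have "card (\<sigma>' - \<sigma>) = 1" using True by simp
    then have sb: "\<sigma>' - \<sigma> = {b}" using b by (metis card_1_singletonE singletonD Diff_iff)
    have eqs: "\<sigma>' = \<tau> - {a'}" using True sb a' unfolding \<tau>_def by blast
    have a'in: "a' \<in> \<tau>" "b \<in> \<tau>" "a' \<noteq> b" using a' b \<tau>_def by auto
    obtain u where u: "u \<in> \<tau>" "u \<noteq> a'" "T.g u a' = T.g b a'" "\<forall>v\<in>\<tau>-{a',u}. T.g u v = T.g a' v"
      using T.F1[OF a'in] by blast
    have tu: "\<tau> - {u} = insert a' (\<sigma>' - {u})" using eqs u a'in by blast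
    have uw: "u \<in> \<sigma>'" using eqs u by blast
    have "mt (insert a' (\<sigma>' - {u})) a' = mt \<sigma> a'" using u(3) gb tu unfolding T.g_def by simp
    moreover have "\<forall>v\<in>\<sigma>'-{u}. mt (insert a' (\<sigma>' - {u})) v = mt \<sigma>' v"
      using u(4) tu eqs unfolding T.g_def by auto
    ultimately show ?thesis using a' uw by blast
  next
    case False
    define \<rho> where "\<rho> = \<tau> - {a'}"
    have adm\<rho>: "adm \<rho>" using T.admT a' \<rho>_def \<tau>_def by auto
    have \<rho>d: "\<rho> - \<sigma>' = (\<sigma> - \<sigma>') - {a'}" using b \<rho>_def \<tau>_def by auto
    have lt: "card (\<rho> - \<sigma>') < card (\<sigma> - \<sigma>')" using \<rho>d a'(1) fs card_Diff1_less[of "\<sigma> - \<sigma>'" a'] by simp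
    have ne: "\<rho> \<noteq> \<sigma>'"
    proof -
      obtain z where "z \<in> (\<sigma> - \<sigma>') - {a'}" using False a' by blast
      then show ?thesis using \<rho>d by blast
    qed
    obtain a'' w where aw: "a'' \<in> \<rho> - \<sigma>'" "w \<in> \<sigma>'"
      "mt (insert a'' (\<sigma>' - {w})) a'' = mt \<rho> a''"
      "\<forall>v\<in>\<sigma>'-{w}. mt (insert a'' (\<sigma>' - {w})) v = mt \<sigma>' v"
      using less.hyps[OF lt adm\<rho> less.prems(2) ne] by blast
    have a''A: "a'' \<in> (\<sigma> - \<sigma>') - {a'}" using aw(1) \<rho>d by simp
    have "mt \<rho> a'' = T.g a' a''" unfolding T.g_def \<rho>_def by simp
    also have "\<dots> = T.g b a''" using a'(2) a''A by blast
    also have "\<dots> = mt \<sigma> a''" by (rule gb)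
    finally show ?thesis using aw a''A by auto
  qed
qed

lemma main:
  assumes "adm \<sigma>" "adm \<sigma>'" "P \<subseteq> \<sigma> \<inter> \<sigma>'" "mt \<sigma> ` P = mt \<sigma>' ` P" "p \<in> P"
  shows "mt \<sigma> p = mt \<sigma>' p"
  using assms
proof (induction "card R - card P" arbitrary: P \<sigma>' rule: less_induct)
  case less
  show ?case
  proof (cases "\<sigma> = \<sigma>'")
    case True then show ?thesis by simp
  next
    case False
    obtain a w where a: "a \<in> \<sigma> - \<sigma>'" and w: "w \<in> \<sigma>'"
      and ea: "mt (insert a (\<sigma>' - {w})) a = mt \<sigma> a"
      and ev: "\<forall>v\<in>\<sigma>'-{w}. mt (insert a (\<sigma>' - {w})) v = mt \<sigma>' v"
      using claimE[OF less.prems(1,2) False] by blast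
    define \<rho> where "\<rho> = insert a (\<sigma>' - {w})"
    have fs: "finite \<sigma>" "finite \<sigma>'" using adm_finite less.prems by auto
    have adm\<rho>: "adm \<rho>"
    proof -
      have "\<rho> \<subseteq> L" using a less.prems(1,2) unfolding adm_def \<rho>_def by auto
      moreover have "card \<rho> = card \<sigma>'"
      proof -
        have na: "a \<notin> \<sigma>' - {w}" using a by auto
        have f1: "finite (\<sigma>' - {w})" using fs by simp
        have "card \<rho> = Suc (card (\<sigma>' - {w}))" unfolding \<rho>_def using card_insert_disjoint[OF f1 na] .
        moreover have "card (\<sigma>' - {w}) = card \<sigma>' - 1" using w fs by simp
        moreover have "card \<sigma>' > 0" using w fs card_gt_0_iff by blast
        ultimately show ?thesis by simp
      qed
      ultimately show ?thesis using less.prems(2) adm_def by simp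
    qed
    have wP: "w \<notin> P"
    proof
      assume wP: "w \<in> P"
      have "mt \<sigma>' w \<in> R" using mt_R less.prems(2) w by blast
      then obtain z where z: "z \<in> \<rho>" "mt \<rho> z = mt \<sigma>' w" using mt_surj[OF adm\<rho>] by blast
      have "z = a"
      proof (rule ccontr)
        assume "z \<noteq> a" then have z': "z \<in> \<sigma>' - {w}" using z \<rho>_def by auto
        then have "mt \<sigma>' z = mt \<sigma>' w" using ev z \<rho>_def by auto
        then have "z = w" using inj_onD[OF mt_inj[OF less.prems(2)]] z' w by auto
        with z' show False by auto
      qed
      then have e1: "mt \<sigma> a = mt \<sigma>' w" using z ea \<rho>_def by simp
      have "mt \<sigma>' w \<in> mt \<sigma> ` P" using wP less.prems(4) by auto
      then obtain p' where p': "p' \<in> P" "mt \<sigma> p' = mt \<sigma>' w" by auto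
      then have "a = p'" using inj_onD[OF mt_inj[OF less.prems(1)], of a p'] a less.prems(3) e1 by auto
      then show False using p' a less.prems(3) by auto
    qed
    define P' where "P' = insert a P"
    have aP: "a \<notin> P" using a less.prems(3) by auto
    have sub: "P' \<subseteq> \<sigma> \<inter> \<rho>" using a less.prems(3) wP unfolding P'_def \<rho>_def by auto
    have i1: "mt \<rho> ` P = mt \<sigma>' ` P"
      by (rule image_cong) (use ev less.prems(3) wP \<rho>_def in auto)
    have img: "mt \<sigma> ` P' = mt \<rho> ` P'"
      using i1 ea less.prems(4) unfolding P'_def \<rho>_def by simp
    have finP: "finite P" using less.prems(3) fs finite_subset by blast
    have "card P' \<le> card \<sigma>" using sub fs card_mono by blast
    then have cP: "card P' \<le> card R" using less.prems(1) adm_def by simp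
    have cP': "card P' = Suc (card P)" using finP aP P'_def by simp
    have lt: "card R - card P' < card R - card P" using cP cP' by simp
    have "mt \<sigma> p = mt \<rho> p" using less.hyps[OF lt less.prems(1) adm\<rho> sub img] less.prems(5)
      unfolding P'_def by blast
    also have "\<dots> = mt \<sigma>' p" using ev less.prems(3,5) wP unfolding \<rho>_def by auto
    finally show ?thesis .
  qed
qed

end

theorem proposition3p5:
  fixes L :: "'a set" and R :: "'b set" and M :: "'a set \<Rightarrow> ('a \<times> 'b) set"
    and \<sigma> \<sigma>' P :: "'a set" and Q :: "'b set"
  assumes "finite L" and "finite R" and "card R \<le> card L"
    and "linkage_matching_field L R M"
    and "\<sigma> \<subseteq> L" and "card \<sigma> = card R"
    and "\<sigma>' \<subseteq> L" and "card \<sigma>' = card R"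
    and "P \<subseteq> \<sigma> \<inter> \<sigma>'" and "Q \<subseteq> R" and "card P = card Q"
    and "perfect_matching (restrict_graph (M \<sigma>) P Q) P Q"
    and "perfect_matching (restrict_graph (M \<sigma>') P Q) P Q"
  shows "restrict_graph (M \<sigma>) P Q = restrict_graph (M \<sigma>') P Q"
proof -
  interpret lmf L R M using assms(1,2,4) by unfold_locales
  have as: "adm \<sigma>" "adm \<sigma>'" using assms adm_def by auto
  have img: "mt s ` P = Q" if s: "adm s" "P \<subseteq> s" and pmq: "perfect_matching (restrict_graph (M s) P Q) P Q" for s
  proof
    show "mt s ` P \<subseteq> Q"
    proof
      fix q assume "q \<in> mt s ` P" then obtain p where p: "p \<in> P" "q = mt s p" by auto
      from pmq p obtain q' where "(p,q') \<in> restrict_graph (M s) P Q" unfolding perfect_matching_def by blast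
      then have "(p,q') \<in> M s" "q' \<in> Q" unfolding restrict_graph_def by auto
      then show "q \<in> Q" using mt_iff[OF s(1)] p by auto
    qed
    show "Q \<subseteq> mt s ` P"
    proof
      fix q assume q: "q \<in> Q"
      from pmq q obtain p where "(p,q) \<in> restrict_graph (M s) P Q" unfolding perfect_matching_def by blast
      then have "(p,q) \<in> M s" "p \<in> P" unfolding restrict_graph_def by auto
      then show "q \<in> mt s ` P" using mt_iff[OF s(1)] by auto
    qed
  qed
  have eqimg: "mt \<sigma> ` P = mt \<sigma>' ` P" using img[OF as(1) _ assms(12)] img[OF as(2) _ assms(13)] assms(9) by auto
  have agree: "mt \<sigma> p = mt \<sigma>' p" if "p \<in> P" for p using main[OF as(1) as(2) assms(9) eqimg that] .
  show ?thesis
  proof (rule set_eqI)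
    fix e :: "'a \<times> 'b"
    obtain p q where e: "e = (p,q)" by (cases e)
    show "e \<in> restrict_graph (M \<sigma>) P Q \<longleftrightarrow> e \<in> restrict_graph (M \<sigma>') P Q"
      unfolding restrict_graph_def e using mt_iff[OF as(1)] mt_iff[OF as(2)] agree assms(9) by auto
  qed
qed

end
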